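(* Let $X,Y$ be metrizable vector spaces over $K$ with metrics $d_X,d_Y$, and let $F:X\to Y$. For $r>0$ put $B_X(r)=\{x\in X:d_X(x,0)<r\}$ and $B_Y(r)=\{y\in Y:d_Y(y,0)<r\}$. (i) If $F\in B_d(X,Y)$, then for every $\epsilon_1>0$ there exists $\epsilon_2>0$ with $F[B_X(\epsilon_1)]\subset B_Y(\epsilon_2)$. (ii) Conversely, suppose that the limit $\lim_{x\to0}\frac{d_Y[F(x),0]}{d_X(x,0)}$ exists and is finite, that there are $\epsilon,\epsilon^*>0$ such that $F$ maps the complement of $B_X(\epsilon)$ into a bounded subset of $B_Y(\epsilon^* )$, and that for every $\epsilon_1>0$ there exists $\epsilon_2>0$ with $F[B_X(\epsilon_1)]\subset B_Y(\epsilon_2)$. Then $F\in B_d(X,Y)$.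
   Context: $K$ is $\mathbb{R}$ or $\mathbb{C}$. For maps $F_1,F_2:X\to Y$, $d(F_1,F_2)=\max\left\{\sup_{x\neq0,x\in X}\frac{d_Y[F_1(x),F_2(x)]}{d_X(x,0)},\ d_Y[F_1(0),F_2(0)]\right\}\in[0,\infty]$, and $B_d(X,Y)$ is the set of maps $F:X\to Y$ with $d(F,0)<\infty$. *)

theory Defs
  imports "HOL-Analysis.Analysis"
begin

definition is_metric :: "('a \<Rightarrow> 'a \<Rightarrow> real) \<Rightarrow> bool" where
  "is_metric d \<longleftrightarrow>
     (\<forall>x y. 0 \<le> d x y) \<and> (\<forall>x y. d x y = 0 \<longleftrightarrow> x = y) \<and>
     (\<forall>x y. d x y = d y x) \<and> (\<forall>x y z. d x z \<le> d x y + d y z)"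

definition metric_vector_space :: "('a::real_vector \<Rightarrow> 'a \<Rightarrow> real) \<Rightarrow> bool" where
  "metric_vector_space d \<longleftrightarrow> is_metric d \<and>
     (\<forall>xs x ys y. (\<lambda>n. d (xs n) x) \<longlonglongrightarrow> 0 \<longrightarrow> (\<lambda>n. d (ys n) y) \<longlonglongrightarrow> 0 \<longrightarrow>
        (\<lambda>n. d (xs n + ys n) (x + y)) \<longlonglongrightarrow> 0) \<and>
     (\<forall>as a xs x. as \<longlonglongrightarrow> a \<longrightarrow> (\<lambda>n. d (xs n) x) \<longlonglongrightarrow> 0 \<longrightarrow>
        (\<lambda>n. d (as n *\<^sub>R xs n) (a *\<^sub>R x)) \<longlonglongrightarrow> 0)"

definition ball0 :: "('a::zero \<Rightarrow> 'a \<Rightarrow> real) \<Rightarrow> real \<Rightarrow> 'a set" where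
  "ball0 d r = {x. d x 0 < r}"

definition dbounded :: "('a \<Rightarrow> 'a \<Rightarrow> real) \<Rightarrow> 'a set \<Rightarrow> bool" where
  "dbounded d S \<longleftrightarrow> (\<exists>x c. \<forall>y\<in>S. d x y \<le> c)"

definition map_dist ::
  "('a::zero \<Rightarrow> 'a \<Rightarrow> real) \<Rightarrow> ('b \<Rightarrow> 'b \<Rightarrow> real) \<Rightarrow> ('a \<Rightarrow> 'b) \<Rightarrow> ('a \<Rightarrow> 'b) \<Rightarrow> ereal" where
  "map_dist dX dY F1 F2 =
     max (SUP x\<in>{x. x \<noteq> 0}. ereal (dY (F1 x) (F2 x) / dX x 0)) (ereal (dY (F1 0) (F2 0)))"

definition Bd :: "('a::zero \<Rightarrow> 'a \<Rightarrow> real) \<Rightarrow> ('b::zero \<Rightarrow> 'b \<Rightarrow> real) \<Rightarrow> ('a \<Rightarrow> 'b) set" where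
  "Bd dX dY = {F. map_dist dX dY F (\<lambda>_. 0) < \<infinity>}"

end

theory Submission
  imports Defs
begin

theorem theorem8:
  fixes dX :: "'a::real_vector \<Rightarrow> 'a \<Rightarrow> real" and dY :: "'b::real_vector \<Rightarrow> 'b \<Rightarrow> real"
    and F :: "'a \<Rightarrow> 'b"
  assumes "metric_vector_space dX" and "metric_vector_space dY"
  shows "(F \<in> Bd dX dY \<longrightarrow>
            (\<forall>e1>0. \<exists>e2>0. F ` ball0 dX e1 \<subseteq> ball0 dY e2))
       \<and> ((\<exists>L::real. \<forall>e>0. \<exists>\<delta>>0. \<forall>x. x \<noteq> 0 \<and> dX x 0 < \<delta> \<longrightarrow>
               \<bar>dY (F x) 0 / dX x 0 - L\<bar> < e)
          \<and> (\<exists>e>0. \<exists>e'>0. \<exists>S. dbounded dY S \<and> S \<subseteq> ball0 dY e' \<and> F ` (- ball0 dX e) \<subseteq> S)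
          \<and> (\<forall>e1>0. \<exists>e2>0. F ` ball0 dX e1 \<subseteq> ball0 dY e2)
          \<longrightarrow> F \<in> Bd dX dY)"
proof -
  have mX: "is_metric dX" and mY: "is_metric dY"
    using assms unfolding metric_vector_space_def by auto
  have pos: "x \<noteq> 0 \<Longrightarrow> dX x 0 > 0" for x
    using mX unfolding is_metric_def by (metis order_le_less)
  have nnY: "dY y 0 \<ge> 0" for y using mY unfolding is_metric_def by auto
  have nnX: "dX y 0 \<ge> 0" for y using mX unfolding is_metric_def by auto
  let ?S = "SUP x\<in>{x. x \<noteq> 0}. ereal (dY (F x) 0 / dX x 0)"
  have md: "map_dist dX dY F (\<lambda>_. 0) = max ?S (ereal (dY (F 0) 0))"
    unfolding map_dist_def by simp
  have part1: "\<forall>e1>0. \<exists>e2>0. F ` ball0 dX e1 \<subseteq> ball0 dY e2" if "F \<in> Bd dX dY"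
  proof (intro allI impI)
    fix e1 :: real assume e1: "e1 > 0"
    from that have "map_dist dX dY F (\<lambda>_. 0) < \<infinity>" unfolding Bd_def by simp
    then have "max ?S (ereal (dY (F 0) 0)) < \<infinity>" by (simp only: md)
    then have "?S < \<infinity>" using max.cobounded1 le_less_trans by blast
    then have "?S \<noteq> \<infinity>" by simp
    then have "\<exists>n::nat. ?S < ereal (real n)" by (simp only: less_PInf_Ex_of_nat)
    then obtain n :: nat where n: "?S < ereal (real n)" by (elim exE)
    define M where "M = real n"
    have M0: "M \<ge> 0" unfolding M_def by simp
    have bnd: "dY (F x) 0 \<le> M * dX x 0" if "x \<noteq> 0" for x
    proof -
      have "ereal (dY (F x) 0 / dX x 0) \<le> ?S" using that by (intro SUP_upper) auto
      with n have "ereal (dY (F x) 0 / dX x 0) \<le> ereal M" unfolding M_def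
        by (meson order_trans less_imp_le)
      then have "dY (F x) 0 / dX x 0 \<le> M" by (simp only: ereal_less_eq)
      with pos[OF that] show ?thesis by (simp add: divide_le_eq mult.commute)
    qed
    define e2 where "e2 = M * e1 + dY (F 0) 0 + 1"
    have "e2 > 0" unfolding e2_def using M0 e1 nnY[of "F 0"] by (simp add: add_nonneg_pos)
    moreover have "F ` ball0 dX e1 \<subseteq> ball0 dY e2"
    proof
      fix y assume "y \<in> F ` ball0 dX e1"
      then obtain x where x: "dX x 0 < e1" "y = F x" unfolding ball0_def by auto
      show "y \<in> ball0 dY e2"
      proof (cases "x = 0")
        case True
        have "0 \<le> M * e1" using M0 e1 by simp
        then show ?thesis using True x unfolding ball0_def e2_def by simp
      next
        case False
        have "M * dX x 0 \<le> M * e1" using x M0 by (simp add: mult_left_mono)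
        then show ?thesis using bnd[OF False] x nnY[of "F 0"] unfolding ball0_def e2_def by simp
      qed
    qed
    ultimately show "\<exists>e2>0. F ` ball0 dX e1 \<subseteq> ball0 dY e2" by blast
  qed
  have part2: "F \<in> Bd dX dY" if
    h1: "\<exists>L::real. \<forall>e>0. \<exists>\<delta>>0. \<forall>x. x \<noteq> 0 \<and> dX x 0 < \<delta> \<longrightarrow> \<bar>dY (F x) 0 / dX x 0 - L\<bar> < e"
    and h2: "\<exists>e>0. \<exists>e'>0. \<exists>S. dbounded dY S \<and> S \<subseteq> ball0 dY e' \<and> F ` (- ball0 dX e) \<subseteq> S"
    and h3: "\<forall>e1>0. \<exists>e2>0. F ` ball0 dX e1 \<subseteq> ball0 dY e2"
  proof -
    from h1 obtain L :: real where
      hL: "\<forall>e>0. \<exists>\<delta>>0. \<forall>x. x \<noteq> 0 \<and> dX x 0 < \<delta> \<longrightarrow> \<bar>dY (F x) 0 / dX x 0 - L\<bar> < e"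
      by blast
    from hL[rule_format, of 1] obtain \<delta> where d: "\<delta> > 0"
      and dl0: "\<forall>x. x \<noteq> 0 \<and> dX x 0 < \<delta> \<longrightarrow> \<bar>dY (F x) 0 / dX x 0 - L\<bar> < 1"
      by auto
    have dl: "\<bar>dY (F x) 0 / dX x 0 - L\<bar> < 1" if "x \<noteq> 0" "dX x 0 < \<delta>" for x
      using dl0 that by blast
    from h2 obtain e e' S where e: "e > 0" "e' > 0" "S \<subseteq> ball0 dY e'" "F ` (- ball0 dX e) \<subseteq> S"
      by blast
    from h3 e(1) obtain e2 where e2: "e2 > 0" "F ` ball0 dX e \<subseteq> ball0 dY e2" by blast
    define C where "C = max e' e2"
    have C: "dY (F x) 0 < C" for x
    proof (cases "x \<in> ball0 dX e")
      case True then show ?thesis using e2 unfolding C_def ball0_def by auto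
    next
      case False then have "F x \<in> S" using e by auto
      then show ?thesis using e unfolding C_def ball0_def by auto
    qed
    define M where "M = max (L + 1) (C / \<delta>)"
    have "?S \<le> ereal M"
    proof (rule SUP_least)
      fix x assume "x \<in> {x. x \<noteq> (0::'a)}"
      then have x: "x \<noteq> 0" by simp
      have "dY (F x) 0 / dX x 0 \<le> M"
      proof (cases "dX x 0 < \<delta>")
        case True then show ?thesis using dl[OF x] unfolding M_def by auto
      next
        case False
        have "dY (F x) 0 / dX x 0 \<le> C / dX x 0"
          using C[of x] pos[OF x] by (simp add: divide_right_mono)
        also have "\<dots> \<le> C / \<delta>" using False d C[of x] nnY[of "F x"]
          by (intro divide_left_mono) auto
        finally show ?thesis unfolding M_def by simp
      qed
      then show "ereal (dY (F x) 0 / dX x 0) \<le> ereal M" by simp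
    qed
    then have "max ?S (ereal (dY (F 0) 0)) \<le> max (ereal M) (ereal (dY (F 0) 0))"
      by (rule max.mono) simp
    moreover have "max (ereal M) (ereal (dY (F 0) 0)) < \<infinity>" by (simp add: max_def)
    ultimately have "max ?S (ereal (dY (F 0) 0)) < \<infinity>" by (rule le_less_trans)
    then have "map_dist dX dY F (\<lambda>_. 0) < \<infinity>" by (simp only: md)
    then show ?thesis unfolding Bd_def by simp
  qed
  show ?thesis using part1 part2 by blast
qed

end
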